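(* Let $\mathbb F$ be a finite field with $q$ elements and let $A$ be an $m$-dimensional $\mathbb F$-algebra which can be generated by $r\ge1$ elements as an $\mathbb F$-algebra. For $k\ge r$ let $\mathrm{ng}_k$ be the number of $k$-tuples in $A^k$ which do not generate $A$ as an $\mathbb F$-algebra. Then $\mathrm{ng}_k\le m^{2k/r}q^{mk-k/r}$ for every $k>r$.
   Context: Algebras are associative and unital; elements generate $A$ if the non-commutative monomials in them (including $1$) span $A$. *)

theory Defs
  imports Complex_Main
begin

definition is_F_algebra :: "('a::field \<Rightarrow> 'b::ring_1 \<Rightarrow> 'b) \<Rightarrow> bool" where
  "is_F_algebra smul \<longleftrightarrow> vector_space smul \<and>
     (\<forall>c x y. smul c (x * y) = smul c x * y \<and> smul c (x * y) = x * smul c y)"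

definition F_dim_eq :: "('a::field \<Rightarrow> 'b::ring_1 \<Rightarrow> 'b) \<Rightarrow> nat \<Rightarrow> bool" where
  "F_dim_eq smul m \<longleftrightarrow> (\<exists>B. finite B \<and> \<not> module.dependent smul B \<and>
      module.span smul B = UNIV \<and> card B = m)"

text \<open>A list of elements generates the algebra if the non-commutative monomials in them
  (products of finite words over the elements, including the empty word giving 1) span it.\<close>
definition alg_generates :: "('a::field \<Rightarrow> 'b::ring_1 \<Rightarrow> 'b) \<Rightarrow> 'b list \<Rightarrow> bool" where
  "alg_generates smul xs \<longleftrightarrow>
     module.span smul {prod_list (map (\<lambda>i. xs ! i) w) | w. set w \<subseteq> {..<length xs}} = UNIV"

definition ng :: "('a::field \<Rightarrow> 'b::ring_1 \<Rightarrow> 'b) \<Rightarrow> nat \<Rightarrow> nat" where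
  "ng smul k = card {xs :: 'b list. length xs = k \<and> \<not> alg_generates smul xs}"

end

theory Submission
  imports Defs "HOL-Library.FuncSet" "Jordan_Normal_Form.Determinant"
begin

lemma amgm_prod:
  fixes x :: "'j \<Rightarrow> real"
  assumes "finite J" "card J = t" "t > 0" "\<forall>j\<in>J. x j \<ge> 0"
  shows "(\<Prod>j\<in>J. x j) \<le> ((\<Sum>j\<in>J. x j) / t) ^ t"
proof -
  define A where "A = (\<Sum>j\<in>J. x j) / t"
  have A0: "A \<ge> 0" unfolding A_def using assms by (simp add: sum_nonneg)
  show ?thesis
  proof (cases "A = 0")
    case True
    then have "(\<Sum>j\<in>J. x j) = 0" using assms unfolding A_def by simp
    then have "\<forall>j\<in>J. x j = 0" using assms sum_nonneg_eq_0_iff by blast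
    moreover have "J \<noteq> {}" using assms by auto
    ultimately have "(\<Prod>j\<in>J. x j) = 0" using assms by (metis ex_in_conv prod_zero_iff)
    then show ?thesis using A0 A_def by simp
  next
    case False
    then have Ap: "A > 0" using A0 by simp
    have "(\<Prod>j\<in>J. x j / A) \<le> (\<Prod>j\<in>J. exp (x j / A - 1))"
      apply (rule prod_mono) using assms Ap exp_ge_add_one_self[of "x _ / A - 1"] by auto
    also have "\<dots> = exp (\<Sum>j\<in>J. (x j / A - 1))" by (rule exp_sum[OF assms(1), symmetric])
    also have "(\<Sum>j\<in>J. (x j / A - 1)) = (\<Sum>j\<in>J. x j) / A - t"
      using assms by (simp add: sum_subtractf sum_divide_distrib)
    also have "\<dots> = 0" using Ap assms unfolding A_def by (simp add: field_simps)
    finally have "(\<Prod>j\<in>J. x j / A) \<le> 1" by simp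
    moreover have "(\<Prod>j\<in>J. x j / A) = (\<Prod>j\<in>J. x j) / A ^ t"
      using assms by (simp add: prod_dividef)
    ultimately show ?thesis using Ap unfolding A_def[symmetric]
      by (simp add: divide_le_eq)
  qed
qed

lemma pow_powr_inv: "(M::real) \<ge> 0 \<Longrightarrow> t > 0 \<Longrightarrow> (M ^ t) powr (1 / real t) = M"
  by (simp add: powr_realpow'[symmetric] powr_powr)

lemma holder_eq:
  fixes a :: "'j \<Rightarrow> 'v \<Rightarrow> real"
  assumes "finite V" "finite J" "card J = t" "t > 0" "\<forall>j\<in>J. \<forall>v\<in>V. a j v \<ge> 0"
  shows "(\<Sum>v\<in>V. \<Prod>j\<in>J. a j v powr (1/t)) \<le> (\<Prod>j\<in>J. (\<Sum>v\<in>V. a j v) powr (1/t))"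
proof (cases "\<exists>j\<in>J. (\<Sum>v\<in>V. a j v) = 0")
  case True
  then obtain j0 where j0: "j0 \<in> J" "(\<Sum>v\<in>V. a j0 v) = 0" by blast
  then have "\<forall>v\<in>V. a j0 v = 0" using assms sum_nonneg_eq_0_iff by blast
  then have "\<forall>v\<in>V. a j0 v powr (1/t) = 0" by simp
  then have "\<forall>v\<in>V. (\<Prod>j\<in>J. a j v powr (1/t)) = 0" using j0 assms
    by (metis prod_zero_iff)
  then have "(\<Sum>v\<in>V. \<Prod>j\<in>J. a j v powr (1/t)) = 0" by simp
  then show ?thesis by (simp add: prod_nonneg)
next
  case False
  define S where "S j = (\<Sum>v\<in>V. a j v)" for j
  have Sp: "\<forall>j\<in>J. S j > 0" using False assms unfolding S_def
    by (metis less_eq_real_def sum_nonneg)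
  have key: "(\<Prod>j\<in>J. a j v powr (1/t)) \<le> (\<Sum>j\<in>J. a j v / S j) / t * (\<Prod>j\<in>J. S j powr (1/t))"
    if v: "v \<in> V" for v
  proof -
    have "(\<Prod>j\<in>J. a j v powr (1/t)) = (\<Prod>j\<in>J. (a j v / S j) powr (1/t) * S j powr (1/t))"
      apply (rule prod.cong[OF refl]) using Sp assms v by (simp add: powr_divide less_imp_neq[symmetric])
    also have "\<dots> = (\<Prod>j\<in>J. a j v / S j) powr (1/t) * (\<Prod>j\<in>J. S j powr (1/t))"
      using assms Sp v by (simp add: prod.distrib prod_powr_distrib)
    also have "(\<Prod>j\<in>J. a j v / S j) powr (1/t) \<le> (\<Sum>j\<in>J. a j v / S j) / t"
    proof -
      have P0: "(\<Prod>j\<in>J. a j v / S j) \<ge> 0" using assms Sp v by (auto intro!: prod_nonneg divide_nonneg_pos)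
      have M0: "(\<Sum>j\<in>J. a j v / S j) / t \<ge> 0" using assms Sp v by (auto intro!: sum_nonneg divide_nonneg_pos)
      have "(\<Prod>j\<in>J. a j v / S j) \<le> ((\<Sum>j\<in>J. a j v / S j) / t) ^ t"
        apply (rule amgm_prod) using assms Sp v by auto
      then have "(\<Prod>j\<in>J. a j v / S j) powr (1/t) \<le> (((\<Sum>j\<in>J. a j v / S j) / t) ^ t) powr (1/t)"
        using P0 by (simp add: powr_mono2)
      also have "\<dots> = (\<Sum>j\<in>J. a j v / S j) / t"
        using M0 assms by (rule_tac pow_powr_inv) auto
      finally show ?thesis .
    qed
    finally show ?thesis using Sp by (simp add: mult_right_mono prod_nonneg)
  qed
  have "(\<Sum>v\<in>V. \<Prod>j\<in>J. a j v powr (1/t)) \<le> (\<Sum>v\<in>V. (\<Sum>j\<in>J. a j v / S j) / t * (\<Prod>j\<in>J. S j powr (1/t)))"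
    by (rule sum_mono) (use key in auto)
  also have "\<dots> = (\<Sum>j\<in>J. (\<Sum>v\<in>V. a j v) / S j) / t * (\<Prod>j\<in>J. S j powr (1/t))"
    by (simp add: sum_distrib_right[symmetric] sum_divide_distrib[symmetric] sum.swap[of _ V J])
       (simp add: sum.swap[of _ V J] sum_divide_distrib)
  also have "(\<Sum>j\<in>J. (\<Sum>v\<in>V. a j v) / S j) = (\<Sum>j\<in>J. 1)"
    apply (rule sum.cong[OF refl]) using Sp unfolding S_def by force
  also have "\<dots> = t" using assms by simp
  finally show ?thesis using assms unfolding S_def by simp
qed

definition proj :: "nat set \<Rightarrow> (nat \<Rightarrow> 'x) set \<Rightarrow> (nat \<Rightarrow> 'x) set" where
  "proj S Z = (\<lambda>f. restrict f S) ` Z"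

lemma card_fibers:
  assumes "finite Z"
  shows "card Z = (\<Sum>v\<in>g ` Z. card {f\<in>Z. g f = v})"
proof -
  have "Z = (\<Union>v\<in>g ` Z. {f\<in>Z. g f = v})" by auto
  then have "card Z = card (\<Union>v\<in>g ` Z. {f\<in>Z. g f = v})" by simp
  also have "\<dots> = (\<Sum>v\<in>g ` Z. card {f\<in>Z. g f = v})"
    by (rule card_UN_disjoint) (use assms in auto)
  finally show ?thesis .
qed

lemma shearer_powr:
  fixes F :: "'j \<Rightarrow> nat set" and Z :: "(nat \<Rightarrow> 'x) set"
  assumes "finite I" "finite J" "t > 0" "\<forall>i\<in>I. card {j\<in>J. i \<in> F j} = t"
    "Z \<subseteq> extensional I" "finite Z"
  shows "real (card Z) \<le> (\<Prod>j\<in>J. real (card (proj (F j) Z)) powr (1/t))"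
  using assms(1,4,5,6)
proof (induction I arbitrary: Z rule: finite_induct)
  case empty
  then have Zs: "Z \<subseteq> {\<lambda>_. undefined}" by (auto simp: extensional_def)
  show ?case
  proof (cases "Z = {}")
    case True then show ?thesis by (simp add: prod_nonneg)
  next
    case False
    then have "Z = {\<lambda>_. undefined}" using Zs by (metis subset_singletonD)
    then have "card Z = 1" by simp
    moreover have "(\<Prod>j\<in>J. real (card (proj (F j) Z)) powr (1/t)) \<ge> 1"
    proof (rule prod_ge_1)
      fix j assume "j \<in> J"
      have "card (proj (F j) Z) \<ge> 1" using False empty.prems(3) unfolding proj_def
        by (simp add: Suc_leI card_gt_0_iff)
      then show "1 \<le> real (card (proj (F j) Z)) powr (1/t)" using assms(3) by (intro ge_one_powr_ge_zero) auto
    qed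
    ultimately show ?thesis by simp
  qed
next
  case (insert n I)
  define V where "V = (\<lambda>f. f n) ` Z"
  define Zv where "Zv v = {f\<in>Z. f n = v}" for v
  define Zp where "Zp v = (\<lambda>f. f(n:=undefined)) ` Zv v" for v
  define J0 where "J0 = {j\<in>J. n \<notin> F j}"
  define J1 where "J1 = {j\<in>J. n \<in> F j}"
  define P where "P j = real (card (proj (F j) Z))" for j
  define a where "a j v = real (card (proj (F j) (Zv v)))" for j v
  have finV: "finite V" using insert.prems unfolding V_def by simp
  have finZv: "finite (Zv v)" for v using insert.prems unfolding Zv_def by simp
  have cardZp: "card (Zp v) = card (Zv v)" for v
    unfolding Zp_def
    by (rule card_image) (auto simp: inj_on_def Zv_def fun_eq_iff split: if_splits, metis)
  have extZp: "Zp v \<subseteq> extensional I" for v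
    using insert.prems(2) unfolding Zp_def Zv_def extensional_def by auto
  have IH: "real (card (Zp v)) \<le> (\<Prod>j\<in>J. real (card (proj (F j) (Zp v))) powr (1/t))" for v
    apply (rule insert.IH) using insert.prems extZp finZv unfolding Zp_def by auto
  have J0bound: "real (card (proj (F j) (Zp v))) \<le> P j" if "j \<in> J0" for j v
  proof -
    have "proj (F j) (Zp v) \<subseteq> proj (F j) Z"
      using that unfolding proj_def Zp_def Zv_def J0_def restrict_def
      by (auto simp: image_iff fun_eq_iff)
    then show ?thesis unfolding P_def using insert.prems(3)
      by (simp add: card_mono proj_def)
  qed
  have J1eq: "real (card (proj (F j) (Zp v))) = a j v" if "j \<in> J1" for j v
  proof -
    have "proj (F j) (Zp v) = (\<lambda>h. h(n:=undefined)) ` proj (F j) (Zv v)"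
      using that unfolding proj_def Zp_def J1_def image_image
      by (intro image_cong refl) (auto simp: restrict_def fun_eq_iff)
    moreover have "inj_on (\<lambda>h. h(n:=undefined)) (proj (F j) (Zv v))"
      using that unfolding inj_on_def proj_def Zv_def J1_def
      by (auto simp: fun_eq_iff restrict_def split: if_splits)
    ultimately show ?thesis unfolding a_def by (simp add: card_image)
  qed
  have J1sum: "(\<Sum>v\<in>V. a j v) = P j" if "j \<in> J1" for j
  proof -
    have "proj (F j) Z = (\<Union>v\<in>V. proj (F j) (Zv v))"
      unfolding proj_def Zv_def V_def by auto
    then have "card (proj (F j) Z) = card (\<Union>v\<in>V. proj (F j) (Zv v))" by simp
    also have "\<dots> = (\<Sum>v\<in>V. card (proj (F j) (Zv v)))"
      apply (rule card_UN_disjoint)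
      using finV finZv that unfolding proj_def Zv_def J1_def
      by (auto simp: restrict_def fun_eq_iff) metis+
    finally show ?thesis unfolding a_def P_def by simp
  qed
  have cardJ1: "card J1 = t" using insert.prems(1) unfolding J1_def by simp
  have finJ: "finite J0" "finite J1" unfolding J0_def J1_def using assms(2) by auto
  have Jsplit: "J = J0 \<union> J1" "J0 \<inter> J1 = {}" unfolding J0_def J1_def by auto
  have "real (card Z) = (\<Sum>v\<in>V. real (card (Zv v)))"
    using card_fibers[OF insert.prems(3), of "\<lambda>f. f n"] unfolding V_def Zv_def by simp
  also have "\<dots> \<le> (\<Sum>v\<in>V. (\<Prod>j\<in>J. real (card (proj (F j) (Zp v))) powr (1/t)))"
    by (rule sum_mono) (use IH cardZp in auto)
  also have "\<dots> \<le> (\<Sum>v\<in>V. (\<Prod>j\<in>J0. P j powr (1/t)) * (\<Prod>j\<in>J1. a j v powr (1/t)))"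
  proof (rule sum_mono)
    fix v
    have "(\<Prod>j\<in>J. real (card (proj (F j) (Zp v))) powr (1/t)) =
      (\<Prod>j\<in>J0. real (card (proj (F j) (Zp v))) powr (1/t)) *
      (\<Prod>j\<in>J1. real (card (proj (F j) (Zp v))) powr (1/t))"
      unfolding Jsplit(1) by (rule prod.union_disjoint) (use finJ Jsplit in auto)
    also have "(\<Prod>j\<in>J1. real (card (proj (F j) (Zp v))) powr (1/t)) = (\<Prod>j\<in>J1. a j v powr (1/t))"
      by (rule prod.cong) (use J1eq in auto)
    also have "(\<Prod>j\<in>J0. real (card (proj (F j) (Zp v))) powr (1/t)) \<le> (\<Prod>j\<in>J0. P j powr (1/t))"
      by (rule prod_mono) (use J0bound in \<open>auto intro: powr_mono2\<close>)
    finally show "(\<Prod>j\<in>J. real (card (proj (F j) (Zp v))) powr (1/t))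
       \<le> (\<Prod>j\<in>J0. P j powr (1/t)) * (\<Prod>j\<in>J1. a j v powr (1/t))"
      by (simp add: mult_right_mono prod_nonneg)
  qed
  also have "\<dots> = (\<Prod>j\<in>J0. P j powr (1/t)) * (\<Sum>v\<in>V. \<Prod>j\<in>J1. a j v powr (1/t))"
    by (simp add: sum_distrib_left)
  also have "\<dots> \<le> (\<Prod>j\<in>J0. P j powr (1/t)) * (\<Prod>j\<in>J1. (\<Sum>v\<in>V. a j v) powr (1/t))"
    apply (rule mult_left_mono)
     apply (rule holder_eq) using finV finJ cardJ1 assms(3) by (auto simp: a_def prod_nonneg)
  also have "(\<Prod>j\<in>J1. (\<Sum>v\<in>V. a j v) powr (1/t)) = (\<Prod>j\<in>J1. P j powr (1/t))"
    by (rule prod.cong) (use J1sum in auto)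
  also have "(\<Prod>j\<in>J0. P j powr (1/t)) * (\<Prod>j\<in>J1. P j powr (1/t)) = (\<Prod>j\<in>J. P j powr (1/t))"
    unfolding Jsplit(1) by (rule prod.union_disjoint[symmetric]) (use finJ Jsplit in auto)
  finally show ?case unfolding P_def .
qed

lemma shearer:
  fixes F :: "'j \<Rightarrow> nat set" and Z :: "(nat \<Rightarrow> 'x) set"
  assumes "finite I" "finite J" "t > 0" "\<forall>i\<in>I. card {j\<in>J. i \<in> F j} = t"
    "Z \<subseteq> extensional I" "finite Z"
  shows "card Z ^ t \<le> (\<Prod>j\<in>J. card (proj (F j) Z))"
proof -
  have "real (card Z) ^ t \<le> (\<Prod>j\<in>J. real (card (proj (F j) Z)) powr (1/t)) ^ t"
    by (rule power_mono[OF shearer_powr[OF assms]]) simp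
  also have "\<dots> = (\<Prod>j\<in>J. (real (card (proj (F j) Z)) powr (1/t)) ^ t)"
    by (simp add: prod_power_distrib)
  also have "\<dots> = (\<Prod>j\<in>J. real (card (proj (F j) Z)))"
  proof (rule prod.cong[OF refl])
    fix j
    have "(real (card (proj (F j) Z)) powr (1/t)) ^ t = real (card (proj (F j) Z)) powr (1/t * t)"
      using assms(3) by (simp add: powr_realpow'[symmetric] powr_powr)
    then show "(real (card (proj (F j) Z)) powr (1/t)) ^ t = real (card (proj (F j) Z))"
      using assms(3) by simp
  qed
  finally have "real (card Z ^ t) \<le> real (\<Prod>j\<in>J. card (proj (F j) Z))" by simp
  then show ?thesis by linarith
qed

definition mons :: "'b::ring_1 list \<Rightarrow> 'b set" where
  "mons xs = {prod_list zs | zs. set zs \<subseteq> set xs}"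

lemma mons_eq: "{prod_list (map (\<lambda>i. xs ! i) w) | w. set w \<subseteq> {..<length xs}} = mons xs"
proof
  show "{prod_list (map (\<lambda>i. xs ! i) w) | w. set w \<subseteq> {..<length xs}} \<subseteq> mons xs"
  proof (clarify)
    fix w assume w: "set w \<subseteq> {..<length xs}"
    have "set (map (\<lambda>i. xs ! i) w) \<subseteq> set xs" using w by auto
    then show "prod_list (map (\<lambda>i. xs ! i) w) \<in> mons xs" unfolding mons_def by blast
  qed
  show "mons xs \<subseteq> {prod_list (map (\<lambda>i. xs ! i) w) | w. set w \<subseteq> {..<length xs}}"
  proof
    fix y assume "y \<in> mons xs"
    then obtain zs where zs: "y = prod_list zs" "set zs \<subseteq> set xs" unfolding mons_def by auto
    define c where "c z = (SOME i. i < length xs \<and> xs ! i = z)" for z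
    have cz: "c z < length xs \<and> xs ! c z = z" if "z \<in> set xs" for z
    proof -
      from that obtain i where "i < length xs" "xs ! i = z" by (auto simp: in_set_conv_nth)
      then show ?thesis unfolding c_def by (rule_tac someI[of _ i]) simp
    qed
    have m: "map (\<lambda>i. xs ! i) (map c zs) = zs"
      unfolding map_map by (rule map_idI) (use cz zs(2) in auto)
    have s: "set (map c zs) \<subseteq> {..<length xs}" using cz zs(2) by auto
    show "y \<in> {prod_list (map (\<lambda>i. xs ! i) w) | w. set w \<subseteq> {..<length xs}}"
      using zs(1) m s by (metis (mono_tags, lifting) mem_Collect_eq)
  qed
qed

lemma alg_generates_mons: "alg_generates smul xs \<longleftrightarrow> module.span smul (mons xs) = UNIV"
  unfolding alg_generates_def mons_eq ..

lemma alg_generates_mono: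
  assumes "is_F_algebra smul" "set ys \<subseteq> set xs" "alg_generates smul ys"
  shows "alg_generates smul xs"
proof -
  interpret vector_space smul using assms(1) unfolding is_F_algebra_def by auto
  have "mons ys \<subseteq> mons xs" using assms(2) unfolding mons_def by auto
  then show ?thesis using assms(3) span_mono unfolding alg_generates_mons by blast
qed

definition enc :: "'b list \<Rightarrow> nat \<Rightarrow> 'b" where
  "enc xs = (\<lambda>i. if i < length xs then xs ! i else undefined)"

definition NG :: "('a::field \<Rightarrow> 'b::ring_1 \<Rightarrow> 'b) \<Rightarrow> nat \<Rightarrow> 'b list set" where
  "NG smul k = {xs :: 'b list. length xs = k \<and> \<not> alg_generates smul xs}"

lemma inj_enc: "inj_on enc {xs. length xs = n}"
proof (rule inj_onI)
  fix x y :: "'b list" assume xy: "x \<in> {xs. length xs = n}" "y \<in> {xs. length xs = n}" "enc x = enc y"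
  show "x = y"
  proof (rule nth_equalityI)
    show "length x = length y" using xy by simp
    fix i assume "i < length x"
    then show "x ! i = y ! i" using xy fun_cong[OF xy(3), of i] unfolding enc_def by simp
  qed
qed

lemma ng_step:
  fixes smul :: "'a::field \<Rightarrow> 'b::ring_1 \<Rightarrow> 'b"
  assumes "is_F_algebra smul" "finite (UNIV :: 'b::ring_1 set)" "n \<ge> 2"
  shows "ng smul n ^ (n - 1) \<le> ng smul (n - 1) ^ n"
proof -
  let ?Z = "enc ` NG smul n"
  define F where "F j = {0..<n} - {j}" for j
  have finNG: "finite (NG smul k)" for k
  proof -
    have "finite {xs::'b list. set xs \<subseteq> UNIV \<and> length xs = k}" by (rule finite_lists_length_eq[OF assms(2)])
    moreover have "NG smul k \<subseteq> {xs::'b list. set xs \<subseteq> UNIV \<and> length xs = k}" by (auto simp: NG_def)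
    ultimately show ?thesis by (metis (no_types, lifting) finite_subset)
  qed
  have cZ: "card ?Z = ng smul n"
    unfolding ng_def NG_def[symmetric]
    by (rule card_image, rule inj_on_subset[OF inj_enc[of n]]) (auto simp: NG_def)
  have cover: "\<forall>i\<in>{0..<n}. card {j\<in>{0..<n}. i \<in> F j} = n - 1"
  proof
    fix i assume i: "i \<in> {0..<n}"
    have "{j\<in>{0..<n}. i \<in> F j} = {0..<n} - {i}" using i unfolding F_def by auto
    then show "card {j\<in>{0..<n}. i \<in> F j} = n - 1" using i by simp
  qed
  have projb: "card (proj (F j) ?Z) \<le> ng smul (n - 1)" if j: "j < n" for j
  proof -
    define L where "L = filter (\<lambda>i. i \<noteq> j) [0..<n]"
    have setL: "set L = F j" unfolding L_def F_def by auto
    have lenL: "length L = n - 1"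
    proof -
      have "length L = card (set L)" unfolding L_def by (simp add: distinct_card[symmetric])
      then show ?thesis using setL j unfolding F_def by simp
    qed
    have inj: "inj_on (\<lambda>h. map h L) (proj (F j) ?Z)"
      unfolding inj_on_def proj_def
    proof (clarify)
      fix x y assume "map (restrict (enc x) (F j)) L = map (restrict (enc y) (F j)) L"
      then have "\<forall>i\<in>set L. restrict (enc x) (F j) i = restrict (enc y) (F j) i" by simp
      then show "restrict (enc x) (F j) = restrict (enc y) (F j)"
        unfolding setL by (auto simp: fun_eq_iff restrict_def)
    qed
    have sub: "(\<lambda>h. map h L) ` proj (F j) ?Z \<subseteq> NG smul (n - 1)"
    proof
      fix ys assume "ys \<in> (\<lambda>h. map h L) ` proj (F j) ?Z"
      then obtain xs where xs: "xs \<in> NG smul n" "ys = map (restrict (enc xs) (F j)) L"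
        unfolding proj_def by auto
      have len: "length xs = n" using xs(1) unfolding NG_def by simp
      have "\<forall>i\<in>set L. restrict (enc xs) (F j) i = xs ! i"
        unfolding L_def F_def restrict_def enc_def using len by simp
      then have ys: "ys = map (\<lambda>i. xs ! i) L"
        using xs(2) by simp
      have "length ys = n - 1" using ys lenL by simp
      moreover have "set ys \<subseteq> set xs" using ys xs(1) unfolding L_def NG_def by auto
      ultimately show "ys \<in> NG smul (n - 1)"
        using xs(1) alg_generates_mono[OF assms(1)] unfolding NG_def by blast
    qed
    have "card ((\<lambda>h. map h L) ` proj (F j) ?Z) = card (proj (F j) ?Z)" by (rule card_image[OF inj])
    moreover have "card ((\<lambda>h. map h L) ` proj (F j) ?Z) \<le> card (NG smul (n - 1))"
      by (rule card_mono[OF finNG sub])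
    ultimately have "card (proj (F j) ?Z) \<le> card (NG smul (n - 1))" by simp
    then show ?thesis unfolding ng_def NG_def .
  qed
  have "card ?Z ^ (n - 1) \<le> (\<Prod>j\<in>{0..<n}. card (proj (F j) ?Z))"
    apply (rule shearer[of "{0..<n}"]) using assms(3) cover finNG
    by (auto simp: enc_def extensional_def NG_def)
  also have "\<dots> \<le> (\<Prod>j\<in>{0..<n}. ng smul (n - 1))"
    by (rule prod_mono) (use projb in auto)
  finally show ?thesis using cZ by simp
qed

lemma ng_chain:
  fixes smul :: "'a::field \<Rightarrow> 'b::ring_1 \<Rightarrow> 'b"
  assumes "is_F_algebra smul" "finite (UNIV :: 'b::ring_1 set)" "r \<ge> 1" "k \<ge> r"
  shows "ng smul k ^ r \<le> ng smul r ^ k"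
  using assms(4)
proof (induction k rule: dec_induct)
  case base then show ?case by simp
next
  case (step n)
  have n1: "n \<ge> 1" using step assms by simp
  have "ng smul (Suc n) ^ (n * r) = (ng smul (Suc n) ^ n) ^ r" by (simp add: power_mult)
  also have "\<dots> \<le> (ng smul n ^ Suc n) ^ r"
    using ng_step[OF assms(1,2), of "Suc n"] n1 by (simp add: power_mono)
  also have "\<dots> = (ng smul n ^ r) ^ Suc n" by (metis power_mult mult.commute)
  also have "\<dots> \<le> (ng smul r ^ n) ^ Suc n" by (rule power_mono[OF step.IH]) simp
  also have "\<dots> = (ng smul r ^ Suc n) ^ n" by (metis power_mult mult.commute)
  finally have *: "(ng smul (Suc n) ^ r) ^ n \<le> (ng smul r ^ Suc n) ^ n"
    by (metis power_mult mult.commute)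
  obtain n' where n': "n = Suc n'" using n1 by (cases n) auto
  show ?case by (rule power_le_imp_le_base[of _ n']) (use * n' in auto)
qed

definition val :: "'b::ring_1 list \<Rightarrow> nat list \<Rightarrow> 'b" where
  "val ys w = prod_list (map (\<lambda>i. ys ! i) w)"

definition words :: "nat \<Rightarrow> nat \<Rightarrow> nat list set" where
  "words r l = {w. set w \<subseteq> {..<r} \<and> length w \<le> l}"

lemma val_Cons[simp]: "val ys (i # w) = ys ! i * val ys w" by (simp add: val_def)
lemma val_Nil[simp]: "val ys [] = 1" by (simp add: val_def)

lemma mons_val: "mons ys = val ys ` {w. set w \<subseteq> {..<length ys}}"
  unfolding mons_eq[symmetric] val_def by auto

locale falg =
  fixes smul :: "'a::{finite,field} \<Rightarrow> 'b::ring_1 \<Rightarrow> 'b" and B :: "'b set"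
  assumes alg: "is_F_algebra smul" and finB: "finite B" and indB: "\<not> module.dependent smul B"
    and spanB: "module.span smul B = UNIV"
begin

sublocale finite_dimensional_vector_space smul B
  using alg finB indB spanB unfolding is_F_algebra_def vector_space_def
  by unfold_locales auto

lemma smul_mult_left: "smul c (x * y) = smul c x * y"
  using alg unfolding is_F_algebra_def by blast
lemma smul_mult_right: "x * smul c y = smul c (x * y)"
  using alg unfolding is_F_algebra_def by metis

lemma card_UNIV_b: "finite (UNIV :: 'b set) \<and> card (UNIV :: 'b set) = card (UNIV :: 'a set) ^ card B"
proof -
  let ?f = "\<lambda>f. \<Sum>b\<in>B. smul (f b) b"
  have inj: "inj_on ?f (B \<rightarrow>\<^sub>E UNIV)"
  proof (rule inj_onI)
    fix f g assume fg: "f \<in> B \<rightarrow>\<^sub>E UNIV" "g \<in> B \<rightarrow>\<^sub>E UNIV" "?f f = ?f g"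
    then have eq: "(\<Sum>b\<in>B. smul (f b - g b) b) = 0"
      by (simp add: scale_left_diff_distrib sum_subtractf)
    have H: "\<And>c. (\<Sum>v\<in>B. smul (c v) v) = 0 \<Longrightarrow> \<forall>v\<in>B. c v = 0"
      using independent_explicit[of B] indB by blast
    have "\<forall>b\<in>B. f b - g b = 0" by (rule H) (rule eq)
    then show "f = g" using fg(1,2) by (intro PiE_ext[OF fg(1,2)]) auto
  qed
  have surj: "?f ` (B \<rightarrow>\<^sub>E UNIV) = UNIV"
  proof -
    have "v \<in> ?f ` (B \<rightarrow>\<^sub>E UNIV)" for v
    proof (rule image_eqI)
      show "restrict (representation B v) B \<in> B \<rightarrow>\<^sub>E UNIV" by simp
      have "(\<Sum>b\<in>B. smul (representation B v b) b) = v"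
        by (rule sum_representation_eq) (use indB finB spanB in auto)
      then show "v = ?f (restrict (representation B v) B)" by simp
    qed
    then show ?thesis by blast
  qed
  have bij: "bij_betw ?f (B \<rightarrow>\<^sub>E UNIV) UNIV" using inj surj by (simp add: bij_betw_def)
  have "finite (B \<rightarrow>\<^sub>E (UNIV :: 'a set))" using finB by (simp add: finite_PiE)
  then have "finite (?f ` (B \<rightarrow>\<^sub>E (UNIV :: 'a set)))" by (rule finite_imageI)
  then have "finite (UNIV :: 'b set)" unfolding surj .
  moreover have "card (UNIV :: 'b set) = card (B \<rightarrow>\<^sub>E (UNIV :: 'a set))" using bij_betw_same_card[OF bij] by simp
  ultimately show ?thesis using finB by (simp add: card_PiE)
qed

lemma span_mult_left:
  assumes "u \<in> span S"
  shows "c * u \<in> span ((\<lambda>s. c * s) ` S)"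
proof -
  obtain T a where T: "finite T" "T \<subseteq> S" "u = (\<Sum>v\<in>T. smul (a v) v)"
    using assms unfolding span_explicit by blast
  have "c * u = (\<Sum>v\<in>T. smul (a v) (c * v))"
    unfolding T(3) by (simp add: sum_distrib_left smul_mult_right)
  also have "\<dots> \<in> span ((\<lambda>s. c * s) ` S)"
    by (rule span_sum, rule span_scale, rule span_base) (use T in auto)
  finally show ?thesis .
qed

end

context falg begin

lemma one_ne_zero_b: "(1::'b) \<noteq> 0" by simp

lemma cardB_pos: "card B \<ge> 1"
proof -
  have "(1::'b) \<in> span B" using spanB by simp
  moreover have "B \<noteq> {}"
  proof
    assume "B = {}"
    then have "span B = {0}" by simp
    with spanB show False by (metis UNIV_I empty_iff insert_iff one_ne_zero_b)
  qed
  ultimately show ?thesis using finB by (simp add: Suc_leI card_gt_0_iff)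
qed

lemma short_words:
  assumes "length g = r" "alg_generates smul g"
  shows "\<exists>W. length W = card B \<and> (\<forall>i<card B. W!i \<in> words r (card B - 1)) \<and>
     distinct (map (val g) W) \<and> independent (set (map (val g) W))"
proof -
  define m where "m = card B"
  define U where "U l = span (val g ` words r l)" for l
  have wmono: "words r l \<subseteq> words r l'" if "l \<le> l'" for l l'
    using that unfolding words_def by auto
  have Umono: "U l \<subseteq> U l'" if "l \<le> l'" for l l'
    unfolding U_def by (rule span_mono, rule image_mono, rule wmono[OF that])
  have gen: "span (mons g) = UNIV" using assms(2) alg_generates_mons by blast
  have stab: "U l = UNIV" if st: "U (Suc l) \<subseteq> U l" for l
  proof -
    have all: "set w \<subseteq> {..<r} \<Longrightarrow> val g w \<in> U l" for w
    proof (induction w)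
      case Nil
      have "[] \<in> words r l" unfolding words_def by simp
      then show ?case unfolding U_def by (metis image_eqI span_base)
    next
      case (Cons i w)
      then have i: "i < r" and IH: "val g w \<in> U l" by auto
      have "g ! i * val g w \<in> span ((\<lambda>s. g ! i * s) ` (val g ` words r l))"
        using span_mult_left IH unfolding U_def by blast
      also have "\<dots> \<subseteq> U (Suc l)"
        unfolding U_def
      proof (rule span_mono, clarify)
        fix w' assume "w' \<in> words r l"
        then have "i # w' \<in> words r (Suc l)" using i unfolding words_def by auto
        then show "g ! i * val g w' \<in> val g ` words r (Suc l)" by (metis image_eqI val_Cons)
      qed
      finally show ?case using st by auto
    qed
    have "mons g \<subseteq> U l" using all assms(1) unfolding mons_val by auto
    then have "span (mons g) \<subseteq> U l" unfolding U_def by (metis span_minimal subspace_span)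
    then show ?thesis using gen by auto
  qed
  have dimb: "min (Suc l) m \<le> dim (val g ` words r l)" for l
  proof (induction l)
    case 0
    have "words r 0 = {[]}" unfolding words_def by auto
    then show ?case by simp
  next
    case (Suc l)
    show ?case
    proof (cases "U (Suc l) \<subseteq> U l")
      case True
      then have "U (Suc l) = UNIV" using stab[OF True] Umono[of l "Suc l"] by auto
      then have "dim (val g ` words r (Suc l)) = m"
        unfolding U_def m_def by (metis dim_UNIV dim_span)
      then show ?thesis by simp
    next
      case False
      then have "span (val g ` words r l) \<subset> span (val g ` words r (Suc l))"
        using Umono[of l "Suc l"] unfolding U_def by auto
      then have "dim (val g ` words r l) < dim (val g ` words r (Suc l))" by (rule dim_psubset)
      then show ?thesis using Suc.IH by linarith
    qed
  qed
  have m1: "m \<ge> 1" using cardB_pos unfolding m_def .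
  define S where "S = val g ` words r (m - 1)"
  have dimS: "dim S = m"
    using dimb[of "m - 1"] m1 dim_subset_UNIV[of S] unfolding S_def m_def dimension_def by simp
  have finS: "finite S" unfolding S_def words_def
    by (rule finite_imageI, rule finite_lists_length_le) simp
  obtain C where C: "C \<subseteq> S" "independent C" "S \<subseteq> span C" "card C = dim S"
    using basis_exists[of S] by blast
  have finC: "finite C" using C(1) finS by (rule finite_subset)
  obtain CL where CL: "set CL = C" "distinct CL" using finite_distinct_list[OF finC] by blast
  have lenCL: "length CL = m" using CL C(4) dimS by (metis distinct_card)
  define W where "W = map (\<lambda>v. SOME w. w \<in> words r (m - 1) \<and> val g w = v) CL"
  have Wp: "(SOME w. w \<in> words r (m - 1) \<and> val g w = v) \<in> words r (m - 1) \<and>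
    val g (SOME w. w \<in> words r (m - 1) \<and> val g w = v) = v" if "v \<in> set CL" for v
  proof -
    have "v \<in> S" using that CL C(1) by auto
    then have "\<exists>w. w \<in> words r (m - 1) \<and> val g w = v" unfolding S_def by auto
    then show ?thesis by (rule someI_ex)
  qed
  have mapW: "map (val g) W = CL" unfolding W_def map_map
    by (rule map_idI) (use Wp in auto)
  show ?thesis
  proof (intro exI conjI)
    show "length W = card B" using lenCL unfolding W_def m_def by simp
    show "\<forall>i<card B. W ! i \<in> words r (card B - 1)"
      using Wp lenCL unfolding W_def m_def by auto
    show "distinct (map (val g) W)" using mapW CL by simp
    show "independent (set (map (val g) W))" using mapW CL C by simp
  qed
qed

end

fun cw :: "'b::ring_1 list \<Rightarrow> 'b list \<Rightarrow> nat list \<Rightarrow> nat \<Rightarrow> 'b" where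
  "cw x h [] e = (if e = 0 then 1 else 0)"
| "cw x h (i # w) e = x ! i * cw x h w e + (case e of 0 \<Rightarrow> 0 | Suc e' \<Rightarrow> h ! i * cw x h w e')"

lemma cw_zero: "length w < e \<Longrightarrow> cw x h w e = 0"
  by (induction w arbitrary: e) (auto split: nat.splits)

definition line :: "('a::field \<Rightarrow> 'b::ring_1 \<Rightarrow> 'b) \<Rightarrow> 'b list \<Rightarrow> 'b list \<Rightarrow> 'a \<Rightarrow> 'b list" where
  "line smul x h t = map (\<lambda>i. x ! i + smul t (h ! i)) [0..<length x]"

context falg begin

lemma val_line:
  assumes "set w \<subseteq> {..<length x}"
  shows "val (line smul x h t) w = (\<Sum>e\<le>length w. smul (t ^ e) (cw x h w e))"
  using assms
proof (induction w)
  case Nil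
  then show ?case by simp
next
  case (Cons i w)
  define c where "c e = cw x h w e" for e
  define n where "n = length w"
  have i: "i < length x" using Cons.prems by auto
  have IH: "val (line smul x h t) w = (\<Sum>e\<le>n. smul (t ^ e) (c e))"
    using Cons unfolding c_def n_def by auto
  have "val (line smul x h t) (i # w) = (x ! i + smul t (h ! i)) * (\<Sum>e\<le>n. smul (t ^ e) (c e))"
    using IH i by (simp add: line_def)
  also have "\<dots> = (\<Sum>e\<le>n. smul (t ^ e) (x ! i * c e)) + (\<Sum>e\<le>n. smul (t ^ Suc e) (h ! i * c e))"
    by (simp add: distrib_right sum_distrib_left smul_mult_right smul_mult_left[symmetric]
        scale_right_distrib sum.distrib scale_scale mult.commute)
  also have "(\<Sum>e\<le>n. smul (t ^ e) (x ! i * c e)) = (\<Sum>e\<le>Suc n. smul (t ^ e) (x ! i * c e))"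
    unfolding c_def n_def by (simp add: cw_zero)
  also have "(\<Sum>e\<le>n. smul (t ^ Suc e) (h ! i * c e)) =
      (\<Sum>e\<le>Suc n. smul (t ^ e) (case e of 0 \<Rightarrow> 0 | Suc e' \<Rightarrow> h ! i * c e'))"
    by (subst sum.atMost_Suc_shift) simp
  also have "(\<Sum>e\<le>Suc n. smul (t ^ e) (x ! i * c e)) +
      (\<Sum>e\<le>Suc n. smul (t ^ e) (case e of 0 \<Rightarrow> 0 | Suc e' \<Rightarrow> h ! i * c e')) =
      (\<Sum>e\<le>Suc n. smul (t ^ e) (cw x h (i # w) e))"
    unfolding c_def by (simp add: sum.distrib[symmetric] scale_right_distrib)
  finally show ?case unfolding n_def by simp
qed

definition cpoly :: "'b list \<Rightarrow> 'b list \<Rightarrow> nat list \<Rightarrow> 'b \<Rightarrow> 'a poly" where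
  "cpoly x h w b = (\<Sum>e\<le>length w. monom (representation B (cw x h w e) b) e)"

lemma degree_cpoly: "degree (cpoly x h w b) \<le> length w"
  unfolding cpoly_def by (rule degree_sum_le) (auto intro: order.trans[OF degree_monom_le])

lemma poly_cpoly:
  assumes "set w \<subseteq> {..<length x}"
  shows "poly (cpoly x h w b) t = representation B (val (line smul x h t) w) b"
proof -
  have "representation B (val (line smul x h t) w) b =
     (\<Sum>e\<le>length w. representation B (smul (t ^ e) (cw x h w e)) b)"
    unfolding val_line[OF assms] using indB spanB by (simp add: representation_sum)
  also have "\<dots> = (\<Sum>e\<le>length w. t ^ e * representation B (cw x h w e) b)"
    using indB spanB by (simp add: representation_scale)
  finally show ?thesis unfolding cpoly_def by (simp add: poly_sum poly_monom mult.commute)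
qed

end

context falg begin

definition BL :: "'b list" where "BL = (SOME l. set l = B \<and> distinct l)"

lemma BL: "set BL = B" "distinct BL" "length BL = card B"
proof -
  have "\<exists>l. set l = B \<and> distinct l" using finite_distinct_list[OF finB] by blast
  then have *: "set BL = B \<and> distinct BL" unfolding BL_def by (rule someI_ex)
  then show "set BL = B" "distinct BL" by auto
  then show "length BL = card B" by (metis distinct_card)
qed

definition famM :: "(nat \<Rightarrow> 'b) \<Rightarrow> 'a mat" where
  "famM u = mat (card B) (card B) (\<lambda>(a, i). representation B (u i) (BL ! a))"

lemma famM_carrier: "famM u \<in> carrier_mat (card B) (card B)"
  unfolding famM_def by simp

lemma rep_zero_iff: "(\<forall>a<card B. representation B v (BL ! a) = 0) \<longleftrightarrow> v = 0"
proof
  assume H: "\<forall>a<card B. representation B v (BL ! a) = 0"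
  have "\<forall>b\<in>B. representation B v b = 0"
    using H BL by (metis in_set_conv_nth)
  moreover have "(\<Sum>b\<in>B. smul (representation B v b) b) = v"
    by (rule sum_representation_eq) (use indB finB spanB in auto)
  ultimately show "v = 0" by simp
next
  assume "v = 0"
  then show "\<forall>a<card B. representation B v (BL ! a) = 0" by (simp add: representation_zero)
qed

lemma famM_mult:
  assumes "v \<in> carrier_vec (card B)"
  shows "famM u *\<^sub>v v = 0\<^sub>v (card B) \<longleftrightarrow> (\<Sum>i<card B. smul (v $ i) (u i)) = 0"
proof -
  have comp: "(famM u *\<^sub>v v) $ a = representation B (\<Sum>i<card B. smul (v $ i) (u i)) (BL ! a)"
    if a: "a < card B" for a
  proof -
    have "(famM u *\<^sub>v v) $ a = (\<Sum>i\<in>{0..<card B}. representation B (u i) (BL ! a) * v $ i)"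
      using a assms unfolding famM_def by (simp add: scalar_prod_def)
    also have "\<dots> = (\<Sum>i<card B. v $ i * representation B (u i) (BL ! a))"
      by (simp add: atLeast0LessThan mult.commute)
    also have "\<dots> = representation B (\<Sum>i<card B. smul (v $ i) (u i)) (BL ! a)"
      using indB spanB by (simp add: representation_sum representation_scale)
    finally show ?thesis .
  qed
  have "famM u *\<^sub>v v = 0\<^sub>v (card B) \<longleftrightarrow> (\<forall>a<card B. (famM u *\<^sub>v v) $ a = 0)"
    unfolding vec_eq_iff by (simp add: famM_def)
  also have "\<dots> \<longleftrightarrow> (\<forall>a<card B. representation B (\<Sum>i<card B. smul (v $ i) (u i)) (BL ! a) = 0)"
    using comp by simp
  also have "\<dots> \<longleftrightarrow> (\<Sum>i<card B. smul (v $ i) (u i)) = 0" by (rule rep_zero_iff)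
  finally show ?thesis .
qed

lemma det_famM:
  "det (famM u) = 0 \<longleftrightarrow> (\<exists>c. (\<exists>i<card B. c i \<noteq> 0) \<and> (\<Sum>i<card B. smul (c i) (u i)) = 0)"
proof
  assume "det (famM u) = 0"
  then obtain v where v: "v \<in> carrier_vec (card B)" "v \<noteq> 0\<^sub>v (card B)" "famM u *\<^sub>v v = 0\<^sub>v (card B)"
    using det_0_iff_vec_prod_zero_field[OF famM_carrier] by blast
  have "\<exists>i<card B. v $ i \<noteq> 0"
  proof (rule ccontr)
    assume "\<not> (\<exists>i<card B. v $ i \<noteq> 0)"
    then have "v = 0\<^sub>v (card B)" using v(1) by (auto simp: vec_eq_iff)
    then show False using v(2) by simp
  qed
  moreover have "(\<Sum>i<card B. smul (v $ i) (u i)) = 0" using famM_mult[OF v(1)] v(3) by simp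
  ultimately show "\<exists>c. (\<exists>i<card B. c i \<noteq> 0) \<and> (\<Sum>i<card B. smul (c i) (u i)) = 0" by blast
next
  assume "\<exists>c. (\<exists>i<card B. c i \<noteq> 0) \<and> (\<Sum>i<card B. smul (c i) (u i)) = 0"
  then obtain c i where c: "i < card B" "c i \<noteq> 0" "(\<Sum>i<card B. smul (c i) (u i)) = 0" by blast
  let ?v = "vec (card B) c"
  have "(\<Sum>i<card B. smul (?v $ i) (u i)) = (\<Sum>i<card B. smul (c i) (u i))"
    by (rule sum.cong) auto
  then have "famM u *\<^sub>v ?v = 0\<^sub>v (card B)" using famM_mult[of ?v u] c(3) by simp
  moreover have "?v \<noteq> 0\<^sub>v (card B)" using c(1,2) by (metis index_vec index_zero_vec(1))
  ultimately show "det (famM u) = 0"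
    using det_0_iff_vec_prod_zero_field[OF famM_carrier] by (metis vec_carrier)
qed

lemma indep_nodep:
  fixes n :: nat
  assumes "inj_on u {..<n}" "independent (u ` {..<n})" "(\<Sum>i<n. smul (c i) (u i)) = 0"
  shows "\<forall>i<n. c i = 0"
proof -
  define c' where "c' v = c (the_inv_into {..<n} u v)" for v
  have "(\<Sum>v\<in>u ` {..<n}. smul (c' v) v) = (\<Sum>i<n. smul (c' (u i)) (u i))"
    by (simp add: sum.reindex[OF assms(1)])
  also have "\<dots> = (\<Sum>i<n. smul (c i) (u i))"
    by (rule sum.cong) (auto simp: c'_def the_inv_into_f_f[OF assms(1)])
  finally have "(\<Sum>v\<in>u ` {..<n}. smul (c' v) v) = 0" using assms(3) by simp
  moreover have "\<And>d. (\<Sum>v\<in>u ` {..<n}. smul (d v) v) = 0 \<Longrightarrow> \<forall>v\<in>u ` {..<n}. d v = 0"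
    using assms(2) independent_explicit by blast
  ultimately have "\<forall>v\<in>u ` {..<n}. c' v = 0" by blast
  then show ?thesis by (auto simp: c'_def the_inv_into_f_f[OF assms(1)])
qed

lemma nodep_indep:
  fixes n :: nat
  assumes "\<And>c. (\<Sum>i<n. smul (c i) (u i)) = 0 \<Longrightarrow> \<forall>i<n. c i = 0"
  shows "inj_on u {..<n} \<and> independent (u ` {..<n})"
proof
  show inj: "inj_on u {..<n}"
  proof (rule inj_onI, rule ccontr)
    fix i j assume ij: "i \<in> {..<n}" "j \<in> {..<n}" "u i = u j" "i \<noteq> j"
    define c where "c k = (if k = i then 1 else 0) - (if k = j then 1 else (0::'a))" for k
    have "(\<Sum>k<n. smul (c k) (u k)) = (\<Sum>k<n. (if k = i then u k else 0)) - (\<Sum>k<n. (if k = j then u k else 0))"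
    proof -
      have "smul (c k) (u k) = (if k = i then u k else 0) - (if k = j then u k else 0)" for k
        unfolding c_def by (simp add: scale_left_diff_distrib)
      then show ?thesis by (simp add: sum_subtractf)
    qed
    also have "\<dots> = u i - u j"
    proof -
      have "(\<Sum>k<n. (if k = i then u k else 0)) = u i" using ij(1) by (subst sum.delta) auto
      moreover have "(\<Sum>k<n. (if k = j then u k else 0)) = u j" using ij(2) by (subst sum.delta) auto
      ultimately show ?thesis by simp
    qed
    also have "\<dots> = 0" using ij by simp
    finally have "\<forall>k<n. c k = 0" by (rule assms)
    then show False using ij unfolding c_def by auto
  qed
  show "independent (u ` {..<n})"
    unfolding independent_explicit
  proof (intro conjI allI impI ballI)
    show "finite (u ` {..<n})" by simp
    fix d v assume d: "(\<Sum>v\<in>u ` {..<n}. smul (d v) v) = 0" and v: "v \<in> u ` {..<n}"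
    have "(\<Sum>i<n. smul (d (u i)) (u i)) = 0" using d sum.reindex[OF inj, of "\<lambda>v. smul (d v) v"] by simp
    then have "\<forall>i<n. d (u i) = 0" by (rule assms)
    then show "d v = 0" using v by auto
  qed
qed

lemma indep_spans:
  assumes "inj_on u {..<card B}" "independent (u ` {..<card B})"
  shows "span (u ` {..<card B}) = UNIV"
proof -
  have "card (u ` {..<card B}) = card B" using card_image[OF assms(1)] by simp
  then have "UNIV \<subseteq> span (u ` {..<card B})"
    using card_ge_dim_independent[of "u ` {..<card B}" UNIV] assms(2) by simp
  then show ?thesis by auto
qed

end

lemma length_line[simp]: "length (line smul x h t) = length x" by (simp add: line_def)
lemma nth_line[simp]: "i < length x \<Longrightarrow> line smul x h t ! i = x ! i + smul t (h ! i)"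
  by (simp add: line_def)

context falg begin

lemma bad_t_bound:
  assumes g: "length g = r" "alg_generates smul g" and x: "length x = r"
    and W: "length W = card B" "\<forall>i<card B. W ! i \<in> words r (card B - 1)"
      "distinct (map (val g) W)" "independent (set (map (val g) W))"
  shows "card {t. \<not> alg_generates smul (line smul x (map (\<lambda>i. g ! i - x ! i) [0..<r]) t)}
           \<le> (card B - 1) * card B"
proof -
  define m where "m = card B"
  define h where "h = map (\<lambda>i. g ! i - x ! i) [0..<r]"
  define u where "u t = (\<lambda>i. val (line smul x h t) (W ! i))" for t
  define Mp where "Mp = mat m m (\<lambda>(a, i). cpoly x h (W ! i) (BL ! a))"
  have Wset: "set (W ! i) \<subseteq> {..<length x}" "length (W ! i) \<le> m - 1" if "i < m" for i
    using W(2) that x unfolding words_def m_def by auto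
  have detp: "poly (det Mp) t = det (famM (u t))" for t
  proof -
    interpret ph: comm_ring_hom "\<lambda>p. poly p t" by unfold_locales auto
    have "map_mat (\<lambda>p. poly p t) Mp = famM (u t)"
      by (rule eq_matI) (auto simp: Mp_def famM_def m_def u_def poly_cpoly Wset)
    then show ?thesis using ph.hom_det[of Mp] by simp
  qed
  have line1: "line smul x h 1 = g"
    by (rule nth_equalityI) (auto simp: h_def x g)
  have u1: "u 1 = (\<lambda>i. val g (W ! i))" unfolding u_def line1 ..
  have inj1: "inj_on (u 1) {..<m}"
    using W(3) W(1) unfolding u1 m_def distinct_conv_nth inj_on_def by auto
  have img1: "u 1 ` {..<m} = set (map (val g) W)"
    unfolding u1 m_def W(1)[symmetric] by (force simp: set_conv_nth)
  have "det (famM (u 1)) \<noteq> 0"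
  proof
    assume "det (famM (u 1)) = 0"
    then obtain c i where c: "i < m" "c i \<noteq> 0" "(\<Sum>i<m. smul (c i) (u 1 i)) = 0"
      unfolding det_famM m_def by blast
    have "\<forall>i<m. c i = 0" by (rule indep_nodep[OF inj1 _ c(3)]) (use img1 W(4) in simp)
    then show False using c by blast
  qed
  then have detne: "det Mp \<noteq> 0" using detp[of 1] by auto
  have deg: "degree (det Mp) \<le> (m - 1) * m"
  proof (rule degree_det_le)
    fix i j assume ij: "i < m" "j < m"
    have "degree (cpoly x h (W ! j) (BL ! i)) \<le> length (W ! j)" by (rule degree_cpoly)
    also have "\<dots> \<le> m - 1" using Wset(2)[OF ij(2)] .
    finally show "degree (Mp $$ (i, j)) \<le> m - 1" using ij by (simp add: Mp_def)
  qed (simp add: Mp_def)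
  have sub: "{t. \<not> alg_generates smul (line smul x h t)} \<subseteq> {t. poly (det Mp) t = 0}"
  proof (clarify, rule ccontr)
    fix t assume ng: "\<not> alg_generates smul (line smul x h t)" and ne: "poly (det Mp) t \<noteq> 0"
    then have "det (famM (u t)) \<noteq> 0" using detp by simp
    then have "\<And>c. (\<Sum>i<m. smul (c i) (u t i)) = 0 \<Longrightarrow> \<forall>i<m. c i = 0"
      unfolding det_famM m_def by blast
    then have ii: "inj_on (u t) {..<m} \<and> independent (u t ` {..<m})" by (rule nodep_indep)
    then have "span (u t ` {..<m}) = UNIV" using indep_spans unfolding m_def by blast
    moreover have "u t ` {..<m} \<subseteq> mons (line smul x h t)"
      unfolding mons_val u_def using Wset by auto
    ultimately have "span (mons (line smul x h t)) = UNIV" by (metis span_mono top.extremum_uniqueI)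
    then show False using ng alg_generates_mons by blast
  qed
  have "card {t. \<not> alg_generates smul (line smul x h t)} \<le> card {t. poly (det Mp) t = 0}"
    by (rule card_mono[OF _ sub]) simp
  also have "\<dots> \<le> degree (det Mp)" by (rule card_poly_roots_bound[OF detne])
  finally show ?thesis using deg unfolding h_def m_def by simp
qed

end

lemma card_filter_sum: "finite A \<Longrightarrow> card {x\<in>A. P x} = (\<Sum>x\<in>A. if P x then 1 else 0)"
  by (simp add: sum.If_cases Int_def)

context falg begin

lemma count_t:
  assumes g: "length g = r" and t: "t \<noteq> 1"
  shows "card {x. length x = r \<and> \<not> alg_generates smul (line smul x (map (\<lambda>i. g ! i - x ! i) [0..<r]) t)}
          = ng smul r"
proof -
  define \<Phi> where "\<Phi> x = line smul x (map (\<lambda>i. g ! i - x ! i) [0..<r]) t" for x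
  define \<Psi> where "\<Psi> z = map (\<lambda>i. smul (inverse (1 - t)) (z ! i - smul t (g ! i))) [0..<r]" for z
  have t1: "1 - t \<noteq> 0" using t by simp
  have Phi_nth: "\<Phi> x ! i = smul (1 - t) (x ! i) + smul t (g ! i)" if "length x = r" "i < r" for x i
    using that unfolding \<Phi>_def by (simp add: scale_right_diff_distrib scale_left_diff_distrib)
  have lenPhi: "length (\<Phi> x) = length x" for x unfolding \<Phi>_def by simp
  have PhiPsi: "\<Phi> (\<Psi> z) = z" if "length z = r" for z
    by (rule nth_equalityI) (use that in \<open>auto simp: lenPhi Phi_nth \<Psi>_def t1 right_inverse[OF t1]\<close>)
  have inj: "inj_on \<Phi> {x. length x = r}"
  proof (rule inj_onI)
    fix x y assume xy: "x \<in> {x. length x = r}" "y \<in> {x. length x = r}" "\<Phi> x = \<Phi> y"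
    show "x = y"
    proof (rule nth_equalityI)
      show "length x = length y" using xy by simp
      fix i assume i: "i < length x"
      have "\<Phi> x ! i = \<Phi> y ! i" using xy by simp
      moreover have "\<Phi> x ! i = smul (1 - t) (x ! i) + smul t (g ! i)" using xy i by (intro Phi_nth) auto
      moreover have "\<Phi> y ! i = smul (1 - t) (y ! i) + smul t (g ! i)" using xy i by (intro Phi_nth) auto
      ultimately have "smul (1 - t) (x ! i) = smul (1 - t) (y ! i)" by simp
      then show "x ! i = y ! i" using t1 by simp
    qed
  qed
  have img: "\<Phi> ` {x. length x = r \<and> \<not> alg_generates smul (\<Phi> x)} = NG smul r"
  proof
    show "\<Phi> ` {x. length x = r \<and> \<not> alg_generates smul (\<Phi> x)} \<subseteq> NG smul r"
      unfolding NG_def by (auto simp: lenPhi)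
    show "NG smul r \<subseteq> \<Phi> ` {x. length x = r \<and> \<not> alg_generates smul (\<Phi> x)}"
    proof
      fix z assume z: "z \<in> NG smul r"
      then have "length z = r" unfolding NG_def by simp
      then show "z \<in> \<Phi> ` {x. length x = r \<and> \<not> alg_generates smul (\<Phi> x)}"
        using z PhiPsi unfolding NG_def by (intro image_eqI[of _ _ "\<Psi> z"]) (auto simp: \<Psi>_def)
    qed
  qed
  have "card (\<Phi> ` {x. length x = r \<and> \<not> alg_generates smul (\<Phi> x)}) =
      card {x. length x = r \<and> \<not> alg_generates smul (\<Phi> x)}"
    by (rule card_image, rule inj_on_subset[OF inj]) auto
  then have c1: "card {x. length x = r \<and> \<not> alg_generates smul (\<Phi> x)} = card (NG smul r)"
    unfolding img by simp
  show ?thesis unfolding ng_def NG_def[symmetric] using c1 unfolding \<Phi>_def .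
qed

lemma ng_r_bound:
  assumes g: "length g = r" "alg_generates smul g"
  shows "ng smul r * (card (UNIV::'a set) - 1) \<le> card (UNIV::'b set) ^ r * ((card B - 1) * card B)"
proof -
  define D where "D = (card B - 1) * card B"
  define X where "X = {xs::'b list. length xs = r}"
  define T where "T = (UNIV::'a set) - {1}"
  define P where "P x t = (\<not> alg_generates smul (line smul x (map (\<lambda>i. g ! i - x ! i) [0..<r]) t))" for x t
  have finb: "finite (UNIV::'b set)" using card_UNIV_b by simp
  have X_eq: "X = {xs. set xs \<subseteq> UNIV \<and> length xs = r}" unfolding X_def by simp
  have finX: "finite X" unfolding X_eq by (rule finite_lists_length_eq[OF finb])
  have cardX: "card X = card (UNIV::'b set) ^ r" unfolding X_eq by (rule card_lists_length_eq[OF finb])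
  obtain W where W: "length W = card B" "\<forall>i<card B. W ! i \<in> words r (card B - 1)"
      "distinct (map (val g) W)" "independent (set (map (val g) W))"
    using short_words[OF g] by blast
  have "(\<Sum>x\<in>X. card {t\<in>T. P x t}) \<le> (\<Sum>x\<in>X. D)"
  proof (rule sum_mono)
    fix x assume "x \<in> X"
    then have "card {t. P x t} \<le> D" unfolding P_def D_def X_def
      by (intro bad_t_bound[OF g _ W]) simp
    moreover have "card {t\<in>T. P x t} \<le> card {t. P x t}" by (rule card_mono) auto
    ultimately show "card {t\<in>T. P x t} \<le> D" by simp
  qed
  also have "\<dots> = card X * D" by simp
  finally have A: "(\<Sum>x\<in>X. card {t\<in>T. P x t}) \<le> card X * D" .
  have "(\<Sum>x\<in>X. card {t\<in>T. P x t}) = (\<Sum>x\<in>X. \<Sum>t\<in>T. if P x t then 1 else 0)"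
    by (rule sum.cong[OF refl]) (rule card_filter_sum, simp add: T_def)
  also have "\<dots> = (\<Sum>t\<in>T. \<Sum>x\<in>X. if P x t then 1 else 0)" by (rule sum.swap)
  also have "\<dots> = (\<Sum>t\<in>T. card {x\<in>X. P x t})"
    by (rule sum.cong) (auto simp: card_filter_sum finX)
  also have "\<dots> = (\<Sum>t\<in>T. ng smul r)"
  proof (rule sum.cong[OF refl])
    fix t assume "t \<in> T"
    then have "t \<noteq> 1" unfolding T_def by simp
    then show "card {x\<in>X. P x t} = ng smul r"
      using count_t[OF g(1)] unfolding X_def P_def by simp
  qed
  also have "\<dots> = card T * ng smul r" by simp
  also have "card T = card (UNIV::'a set) - 1" unfolding T_def by (simp add: card_Diff_singleton)
  finally show ?thesis using A cardX unfolding D_def by (simp add: mult.commute)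
qed

end

lemma real_final:
  fixes N R q :: real and k r m :: nat
  assumes N0: "N \<ge> 0" and R0: "R \<ge> 0" and m1: "m \<ge> 1" and q1: "q > 0" and r1: "r \<ge> 1"
    and chain: "N ^ r \<le> R ^ k" and k: "k > r"
    and Rb: "R * q \<le> real m ^ 2 * q ^ (m * r)"
  shows "N \<le> real m powr (2 * real k / real r) * q powr (real m * real k - real k / real r)"
proof -
  have r0: "r > 0" using r1 by simp
  have k0: "k \<noteq> 0" using k by simp
  have "N = (N ^ r) powr (1 / real r)" using N0 r0 by (simp add: pow_powr_inv)
  also have "\<dots> \<le> (R ^ k) powr (1 / real r)" by (rule powr_mono2) (use chain N0 in auto)
  also have "(R ^ k) = R powr (real k)" using R0 k0 by (simp add: powr_realpow')
  also have "(R powr (real k)) powr (1 / real r) = R powr (real k / real r)" by (simp add: powr_powr)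
  finally have N1: "N \<le> R powr (real k / real r)" .
  have qp: "q powr (real m * real r - 1) = q ^ (m * r) / q"
  proof -
    have "q powr (real m * real r - 1) = q powr (real m * real r) / q powr 1" by (rule powr_diff)
    moreover have "q powr (real m * real r) = q ^ (m * r)" using powr_realpow[of q "m * r"] q1 by simp
    ultimately show ?thesis using q1 by simp
  qed
  have Rle: "R \<le> real m ^ 2 * q powr (real m * real r - 1)"
    unfolding qp using Rb q1 by (simp add: pos_le_divide_eq)
  have "R powr (real k / real r) \<le> (real m ^ 2 * q powr (real m * real r - 1)) powr (real k / real r)"
    by (rule powr_mono2) (use R0 Rle in auto)
  also have "\<dots> = (real m ^ 2) powr (real k / real r) * (q powr (real m * real r - 1)) powr (real k / real r)"
    using q1 by (simp add: powr_mult)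
  also have "(real m ^ 2) powr (real k / real r) = real m powr (2 * real k / real r)"
  proof -
    have eq: "real m ^ 2 = real m powr (real 2)" using powr_realpow[of "real m" 2] m1 by simp
    have "(real m ^ 2) powr (real k / real r) = real m powr (real 2 * (real k / real r))"
      by (simp only: eq powr_powr)
    then show ?thesis by simp
  qed
  also have "(q powr (real m * real r - 1)) powr (real k / real r) = q powr (real m * real k - real k / real r)"
  proof -
    have "(real m * real r - 1) * (real k / real r) = real m * real k - real k / real r"
      using r0 by (simp add: field_simps)
    then show ?thesis by (simp add: powr_powr)
  qed
  finally show ?thesis using N1 by linarith
qed

theorem mainTheorem6:
  fixes smul :: "'a::{finite,field} \<Rightarrow> 'b::ring_1 \<Rightarrow> 'b"
    and m r k q :: nat
  assumes "q = card (UNIV :: 'a set)"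
    and "is_F_algebra smul"
    and "F_dim_eq smul m"
    and "r \<ge> 1"
    and "\<exists>xs. length xs = r \<and> alg_generates smul xs"
    and "k > r"
  shows "real (ng smul k) \<le>
           real m powr (2 * real k / real r) * real q powr (real m * real k - real k / real r)"
proof -
  obtain B where B: "finite B" "\<not> module.dependent smul B" "module.span smul B = UNIV" "card B = m"
    using assms(3) unfolding F_dim_eq_def by blast
  interpret falg smul B using assms(2) B by unfold_locales auto
  obtain g where g: "length g = r" "alg_generates smul g" using assms(5) by blast
  have cb: "finite (UNIV :: 'b set)" "card (UNIV :: 'b set) = q ^ m"
    using card_UNIV_b assms(1) B(4) by auto
  have m1: "m \<ge> 1" using cardB_pos B(4) by simp
  have q2: "q \<ge> 2"
  proof -
    have "{0::'a, 1} \<subseteq> UNIV" by simp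
    then have "card {0::'a, 1} \<le> q" using assms(1) card_mono[of UNIV "{0::'a,1}"] by simp
    then show ?thesis by simp
  qed
  have nb: "ng smul r * (q - 1) \<le> (q ^ m) ^ r * ((m - 1) * m)"
    using ng_r_bound[OF g] cb assms(1) B(4) by simp
  have chain: "ng smul k ^ r \<le> ng smul r ^ k"
    using ng_chain[OF assms(2) cb(1) assms(4)] assms(6) by simp
  have ngr_le: "ng smul r \<le> (q ^ m) ^ r"
  proof -
    have "ng smul r \<le> card {xs :: 'b list. set xs \<subseteq> UNIV \<and> length xs = r}"
      unfolding ng_def by (rule card_mono[OF finite_lists_length_eq[OF cb(1)]]) auto
    then show ?thesis using card_lists_length_eq[OF cb(1), of r] cb(2) by simp
  qed
  have Rb: "real (ng smul r) * real q \<le> real m ^ 2 * real q ^ (m * r)"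
  proof (cases "m \<le> q")
    case True
    have A: "real (ng smul r) * (real q - 1) \<le> real q ^ (m * r) * ((real m - 1) * real m)"
    proof -
      have "real (ng smul r * (q - 1)) \<le> real ((q ^ m) ^ r * ((m - 1) * m))"
        using nb by (simp only: of_nat_le_iff)
      then show ?thesis using q2 m1 by (simp add: of_nat_diff power_mult)
    qed
    have "real (ng smul r) * real q * (real q - 1) \<le> real q ^ (m * r) * ((real m - 1) * real m) * real q"
      using A q2 by (simp add: mult_right_mono mult.commute mult.left_commute)
    also have "\<dots> \<le> real q ^ (m * r) * (real m ^ 2 * (real q - 1))"
    proof -
      have "(real m - 1) * real m * real q \<le> real m ^ 2 * (real q - 1)"
      proof -
        have "real m * real m \<le> real m * real q" by (rule mult_left_mono) (use True in auto)
        then show ?thesis by (simp add: algebra_simps power2_eq_square)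
      qed
      then show ?thesis by (simp add: mult.assoc mult_left_mono)
    qed
    finally have "real (ng smul r) * real q * (real q - 1) \<le> real m ^ 2 * real q ^ (m * r) * (real q - 1)"
      by (simp add: algebra_simps)
    then show ?thesis using q2 by (simp add: mult_le_cancel_right)
  next
    case False
    have "real (ng smul r) \<le> real ((q ^ m) ^ r)" using ngr_le by (simp only: of_nat_le_iff)
    then have "real (ng smul r) \<le> real q ^ (m * r)" by (simp add: power_mult)
    moreover have "real q \<le> real m ^ 2"
    proof -
      have "real q \<le> real m" using False by simp
      also have "real m * 1 \<le> real m * real m" by (rule mult_left_mono) (use m1 in auto)
      finally show ?thesis by (simp add: power2_eq_square)
    qed
    ultimately have "real (ng smul r) * real q \<le> real q ^ (m * r) * real m ^ 2"
      by (rule mult_mono) auto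
    then show ?thesis by (simp add: mult.commute)
  qed
  have chainR: "real (ng smul k) ^ r \<le> real (ng smul r) ^ k"
  proof -
    have "real (ng smul k ^ r) \<le> real (ng smul r ^ k)" using chain by (simp only: of_nat_le_iff)
    then show ?thesis by simp
  qed
  show ?thesis
    by (rule real_final[where R = "real (ng smul r)", OF _ _ m1 _ assms(4) chainR assms(6) Rb]) (use q2 in auto)
qed

end
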